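(* Let $\mathcal{E}=\{\eta_i,\rho_i\}_{i=1}^n$ be an $m$-party quantum state ensemble and let $x\in\{1,\dots,n\}$. Then $p_{\sf L}(\mathcal{E})=\eta_x$ if and only if $\eta_x\rho_x-\eta_i\rho_i\in\mathbb{SEP}^*$ for all $i=1,\dots,n$. Moreover, in this case $p_{\sf L}(\mathcal{E})=p_{\sf SEP}(\mathcal{E})$.
   Context: Let $\mathcal{H}=\bigotimes_{k=1}^m\mathbb{C}^{d_k}$ with $m,d_1,\dots,d_m\ge 2$, shared among parties $\mathsf{A}_1,\dots,\mathsf{A}_m$ (party $\mathsf{A}_k$ holds the factor $\mathbb{C}^{d_k}$). $\mathbb{H}$ denotes the Hermitian operators on $\mathcal{H}$, $\mathbb{H}_+$ the positive semidefinite ones. A state is $\rho\in\mathbb{H}_+$ with $\operatorname{Tr}\rho=1$; a measurement is a family $\{M_i\}\subseteq\mathbb{H}_+$ with $\sum_i M_i=\mathbb{1}$. An operator $E\in\mathbb{H}_+$ is separable if $E=\sum_s\bigotimes_{k=1}^m E_{s,k}$ with each $E_{s,k}$ positive semidefinite on $\mathbb{C}^{d_k}$; $\mathbb{SEP}$ is the set of separable operators. $E\in\mathbb{H}$ is block positive if $\operatorname{Tr}(E\sigma)\ge 0$ for every separable state $\sigma$; $\mathbb{SEP}^*$ is the set of block-positive operators. A measurement is separable if all its elements are separable, and LOCC if it can be realized by local operations and classical communication among $\mathsf{A}_1,\dots,\mathsf{A}_m$. An ensemble $\mathcal{E}=\{\eta_i,\rho_i\}_{i=1}^n$ consists of states $\rho_i$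 with nonzero probabilities $\eta_i$ summing to $1$. For a measurement $\{M_i\}_{i=1}^n$ the success probability is $\sum_i\eta_i\operatorname{Tr}(\rho_iM_i)$; $p_{\sf G}(\mathcal{E})$, $p_{\sf SEP}(\mathcal{E})$, $p_{\sf L}(\mathcal{E})$ denote its maximum over all measurements, all separable measurements, and all LOCC measurements, respectively. *)

theory Defs
  imports Complex_Main
begin

text \<open>Operators are represented as complex-valued kernels A i j over an index set S
  (finite-dimensional matrices indexed by S). The global Hilbert space
  C^{d_0} tensor ... tensor C^{d_(m-1)} is indexed by multi-indices f with f k < d k for k < m
  and f k = 0 for k >= m. Parties are numbered 0..m-1, outcomes 0..n-1.\<close>

type_synonym 'a mat = "'a \<Rightarrow> 'a \<Rightarrow> complex"

definition idx :: "nat \<Rightarrow> (nat \<Rightarrow> nat) \<Rightarrow> (nat \<Rightarrow> nat) set" where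
  "idx m d = {f. (\<forall>k<m. f k < d k) \<and> (\<forall>k\<ge>m. f k = 0)}"

definition supp_on :: "'a set \<Rightarrow> 'a mat \<Rightarrow> bool" where
  "supp_on S A \<longleftrightarrow> (\<forall>i j. i \<notin> S \<or> j \<notin> S \<longrightarrow> A i j = 0)"

definition herm_on :: "'a set \<Rightarrow> 'a mat \<Rightarrow> bool" where
  "herm_on S A \<longleftrightarrow> supp_on S A \<and> (\<forall>i j. A i j = cnj (A j i))"

definition psd_on :: "'a set \<Rightarrow> 'a mat \<Rightarrow> bool" where
  "psd_on S A \<longleftrightarrow> herm_on S A \<and>
     (\<forall>v :: 'a \<Rightarrow> complex. 0 \<le> Re (\<Sum>i\<in>S. \<Sum>j\<in>S. cnj (v i) * A i j * v j))"

definition id_on :: "'a set \<Rightarrow> 'a mat" where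
  "id_on S = (\<lambda>i j. if i = j \<and> i \<in> S then 1 else 0)"

definition mmult_on :: "'a set \<Rightarrow> 'a mat \<Rightarrow> 'a mat \<Rightarrow> 'a mat" where
  "mmult_on S A B = (\<lambda>i j. \<Sum>l\<in>S. A i l * B l j)"

definition adj :: "'a mat \<Rightarrow> 'a mat" where
  "adj A = (\<lambda>i j. cnj (A j i))"

definition tr_on :: "'a set \<Rightarrow> 'a mat \<Rightarrow> complex" where
  "tr_on S A = (\<Sum>i\<in>S. A i i)"

definition tensor :: "nat \<Rightarrow> (nat \<Rightarrow> nat) \<Rightarrow> (nat \<Rightarrow> nat mat) \<Rightarrow> (nat \<Rightarrow> nat) mat" where
  "tensor m d E = (\<lambda>i j. if i \<in> idx m d \<and> j \<in> idx m d then (\<Prod>k<m. E k (i k) (j k)) else 0)"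

definition local_op :: "nat \<Rightarrow> (nat \<Rightarrow> nat) \<Rightarrow> nat \<Rightarrow> nat mat \<Rightarrow> (nat \<Rightarrow> nat) mat" where
  "local_op m d k K = tensor m d (\<lambda>l. if l = k then K else id_on {..<d l})"

definition is_state :: "nat \<Rightarrow> (nat \<Rightarrow> nat) \<Rightarrow> (nat \<Rightarrow> nat) mat \<Rightarrow> bool" where
  "is_state m d \<rho> \<longleftrightarrow> psd_on (idx m d) \<rho> \<and> tr_on (idx m d) \<rho> = 1"

definition separable :: "nat \<Rightarrow> (nat \<Rightarrow> nat) \<Rightarrow> (nat \<Rightarrow> nat) mat \<Rightarrow> bool" where
  "separable m d E \<longleftrightarrow> psd_on (idx m d) E \<and>
     (\<exists>(N::nat) (F :: nat \<Rightarrow> nat \<Rightarrow> nat mat).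
        (\<forall>s<N. \<forall>k<m. psd_on {..<d k} (F s k)) \<and>
        E = (\<lambda>i j. \<Sum>s<N. tensor m d (F s) i j))"

text \<open>Block-positive operators (the dual cone SEP^*).\<close>
definition block_positive :: "nat \<Rightarrow> (nat \<Rightarrow> nat) \<Rightarrow> (nat \<Rightarrow> nat) mat \<Rightarrow> bool" where
  "block_positive m d E \<longleftrightarrow> herm_on (idx m d) E \<and>
     (\<forall>\<sigma>. separable m d \<sigma> \<and> tr_on (idx m d) \<sigma> = 1 \<longrightarrow>
        0 \<le> Re (tr_on (idx m d) (mmult_on (idx m d) E \<sigma>)))"

definition measurement :: "nat \<Rightarrow> (nat \<Rightarrow> nat) \<Rightarrow> nat \<Rightarrow> (nat \<Rightarrow> (nat \<Rightarrow> nat) mat) \<Rightarrow> bool" where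
  "measurement m d n M \<longleftrightarrow> (\<forall>i<n. psd_on (idx m d) (M i)) \<and>
     (\<lambda>a b. \<Sum>i<n. M i a b) = id_on (idx m d)"

definition sep_measurement :: "nat \<Rightarrow> (nat \<Rightarrow> nat) \<Rightarrow> nat \<Rightarrow> (nat \<Rightarrow> (nat \<Rightarrow> nat) mat) \<Rightarrow> bool" where
  "sep_measurement m d n M \<longleftrightarrow> measurement m d n M \<and> (\<forall>i<n. separable m d (M i))"

text \<open>LOCC measurements (finite-round protocols), defined recursively:
  either output a fixed outcome i, or some party k performs a local instrument with
  Kraus operators K 0, ..., K (r-1) on C^{d k} (sum of K_j^* K_j = identity), broadcasts
  the result j, and the parties continue with an LOCC protocol F j depending on j.\<close>
inductive_set locc :: "nat \<Rightarrow> (nat \<Rightarrow> nat) \<Rightarrow> nat \<Rightarrow> (nat \<Rightarrow> (nat \<Rightarrow> nat) mat) set"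
  for m :: nat and d :: "nat \<Rightarrow> nat" and n :: nat where
  outcome: "i < n \<Longrightarrow> (\<lambda>j. if j = i then id_on (idx m d) else (\<lambda>_ _. (0::complex))) \<in> locc m d n"
| step: "\<lbrakk> k < m;
          \<forall>j<(r::nat). supp_on {..<d k} (K j);
          (\<lambda>a b. \<Sum>j<r. mmult_on {..<d k} (adj (K j)) (K j) a b) = id_on {..<d k};
          \<forall>j<r. F j \<in> locc m d n \<rbrakk> \<Longrightarrow>
        (\<lambda>i a b. \<Sum>j<r. mmult_on (idx m d)
                   (mmult_on (idx m d) (adj (local_op m d k (K j))) (F j i))
                   (local_op m d k (K j)) a b) \<in> locc m d n"

definition locc_measurement :: "nat \<Rightarrow> (nat \<Rightarrow> nat) \<Rightarrow> nat \<Rightarrow> (nat \<Rightarrow> (nat \<Rightarrow> nat) mat) \<Rightarrow> bool" where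
  "locc_measurement m d n M \<longleftrightarrow> M \<in> locc m d n"

definition ensemble :: "nat \<Rightarrow> (nat \<Rightarrow> nat) \<Rightarrow> nat \<Rightarrow> (nat \<Rightarrow> real) \<Rightarrow> (nat \<Rightarrow> (nat \<Rightarrow> nat) mat) \<Rightarrow> bool" where
  "ensemble m d n \<eta> \<rho> \<longleftrightarrow> (\<forall>i<n. \<eta> i > 0 \<and> is_state m d (\<rho> i)) \<and> (\<Sum>i<n. \<eta> i) = 1"

definition success :: "nat \<Rightarrow> (nat \<Rightarrow> nat) \<Rightarrow> nat \<Rightarrow> (nat \<Rightarrow> real) \<Rightarrow> (nat \<Rightarrow> (nat \<Rightarrow> nat) mat)
    \<Rightarrow> (nat \<Rightarrow> (nat \<Rightarrow> nat) mat) \<Rightarrow> real" where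
  "success m d n \<eta> \<rho> M = (\<Sum>i<n. \<eta> i * Re (tr_on (idx m d) (mmult_on (idx m d) (\<rho> i) (M i))))"

definition p_G where
  "p_G m d n \<eta> \<rho> = Sup (success m d n \<eta> \<rho> ` {M. measurement m d n M})"

definition p_SEP where
  "p_SEP m d n \<eta> \<rho> = Sup (success m d n \<eta> \<rho> ` {M. sep_measurement m d n M})"

definition p_L where
  "p_L m d n \<eta> \<rho> = Sup (success m d n \<eta> \<rho> ` {M. locc_measurement m d n M})"

end

theory Submission
  imports Defs
begin

definition qf :: "'a set \<Rightarrow> 'a mat \<Rightarrow> ('a \<Rightarrow> complex) \<Rightarrow> complex" where
  "qf S A v = (\<Sum>i\<in>S. \<Sum>j\<in>S. cnj (v i) * A i j * v j)"

definition rk1 :: "('a \<Rightarrow> complex) \<Rightarrow> 'a mat" where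
  "rk1 u = (\<lambda>i j. u i * cnj (u j))"

lemma mmult_assoc:
  assumes "finite S"
  shows "mmult_on S (mmult_on S A B) C = mmult_on S A (mmult_on S B C)"
  unfolding mmult_on_def
  by (auto simp: sum_distrib_left sum_distrib_right mult.assoc intro!: ext sum.swap[THEN trans])

lemma tr_cyclic: "tr_on S (mmult_on S A B) = tr_on S (mmult_on S B A)"
  unfolding tr_on_def mmult_on_def
  by (subst sum.swap) (simp add: mult.commute)

lemma mmult_sum_right:
  "mmult_on S A (\<lambda>a b. \<Sum>t\<in>T. G t a b) = (\<lambda>a b. \<Sum>t\<in>T. mmult_on S A (G t) a b)"
  unfolding mmult_on_def by (auto simp: sum_distrib_left intro!: ext sum.swap)

lemma mmult_sum_left:
  "mmult_on S (\<lambda>a b. \<Sum>t\<in>T. G t a b) A = (\<lambda>a b. \<Sum>t\<in>T. mmult_on S (G t) A a b)"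
  unfolding mmult_on_def by (auto simp: sum_distrib_right intro!: ext sum.swap)

lemma tr_sum: "tr_on S (\<lambda>a b. \<Sum>t\<in>T. G t a b) = (\<Sum>t\<in>T. tr_on S (G t))"
  unfolding tr_on_def by (rule sum.swap)

lemma mmult_diff_left:
  "mmult_on S (\<lambda>a b. X a b - Y a b) Z = (\<lambda>a b. mmult_on S X Z a b - mmult_on S Y Z a b)"
  unfolding mmult_on_def by (auto simp: algebra_simps sum_subtractf)

lemma mmult_diff_right:
  "mmult_on S Z (\<lambda>a b. X a b - Y a b) = (\<lambda>a b. mmult_on S Z X a b - mmult_on S Z Y a b)"
  unfolding mmult_on_def by (auto simp: algebra_simps sum_subtractf)

lemma mmult_zero_left[simp]: "mmult_on S (\<lambda>a b. 0) Z = (\<lambda>a b. 0)"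
  unfolding mmult_on_def by simp
lemma mmult_zero_right[simp]: "mmult_on S Z (\<lambda>a b. 0) = (\<lambda>a b. 0)"
  unfolding mmult_on_def by simp
lemma tr_zero[simp]: "tr_on S (\<lambda>a b. 0) = 0"
  unfolding tr_on_def by simp

lemma mmult_id_left:
  assumes "supp_on S X" "finite S" shows "mmult_on S (id_on S) X = X"
proof (intro ext)
  fix i j
  have "mmult_on S (id_on S) X i j = (\<Sum>l\<in>S. if l = i then X i j else 0)"
    unfolding mmult_on_def id_on_def by (rule sum.cong) auto
  also have "\<dots> = X i j" using assms unfolding supp_on_def
    by (cases "i \<in> S") (auto simp: sum.delta)
  finally show "mmult_on S (id_on S) X i j = X i j" .
qed

lemma mmult_id_right:
  assumes "supp_on S X" "finite S" shows "mmult_on S X (id_on S) = X"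
proof (intro ext)
  fix i j
  have "mmult_on S X (id_on S) i j = (\<Sum>l\<in>S. if l = j then X i j else 0)"
    unfolding mmult_on_def id_on_def by (rule sum.cong) auto
  also have "\<dots> = X i j" using assms unfolding supp_on_def
    by (cases "j \<in> S") (auto simp: sum.delta)
  finally show "mmult_on S X (id_on S) i j = X i j" .
qed

lemma tr_mmult_id: "finite S \<Longrightarrow> tr_on S (mmult_on S R (id_on S)) = tr_on S R"
proof -
  assume that: "finite S"
  have "\<And>a. a \<in> S \<Longrightarrow> mmult_on S R (id_on S) a a = R a a"
  proof -
    fix a assume a: "a \<in> S"
    have "mmult_on S R (id_on S) a a = (\<Sum>l\<in>S. if l = a then R a a else 0)"
      unfolding mmult_on_def id_on_def by (rule sum.cong) auto
    then show "mmult_on S R (id_on S) a a = R a a" using a that by (simp add: sum.delta)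
  qed
  then show ?thesis using that unfolding tr_on_def by simp
qed

lemma conj_tr:
  assumes "finite S"
  shows "tr_on S (mmult_on S A (mmult_on S (mmult_on S (adj L) F) L))
       = tr_on S (mmult_on S (mmult_on S (mmult_on S L A) (adj L)) F)"
proof -
  have "tr_on S (mmult_on S A (mmult_on S (mmult_on S (adj L) F) L))
      = tr_on S (mmult_on S (mmult_on S A (mmult_on S (adj L) F)) L)"
    by (simp add: mmult_assoc[OF assms])
  also have "\<dots> = tr_on S (mmult_on S L (mmult_on S A (mmult_on S (adj L) F)))"
    by (rule tr_cyclic)
  also have "\<dots> = tr_on S (mmult_on S (mmult_on S (mmult_on S L A) (adj L)) F)"
    by (simp add: mmult_assoc[OF assms])
  finally show ?thesis .
qed

lemma qf_insert:
  assumes "finite S" "a \<notin> S"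
  shows "qf (insert a S) A (v(a:=t)) = qf S A v + cnj t * (\<Sum>j\<in>S. A a j * v j)
          + (\<Sum>i\<in>S. cnj (v i) * A i a) * t + cnj t * A a a * t"
proof -
  have ne: "\<And>i. i \<in> S \<Longrightarrow> (i = a) = False" using assms by auto
  show ?thesis
    unfolding qf_def using assms
    apply (simp add: sum.distrib sum_distrib_left sum_distrib_right ne cong: sum.cong)
    apply (simp add: algebra_simps)
    done
qed



lemma sum_delta_r: "finite S \<Longrightarrow> (\<Sum>l\<in>S. f l * (if l = j then 1 else 0)) = (if j \<in> S then f j else (0::'b::comm_ring_1))"
  by (simp add: if_distrib[where f="\<lambda>x. _ * x"] sum.delta cong: if_cong)
lemma sum_delta_l: "finite S \<Longrightarrow> (\<Sum>l\<in>S. (if l = j then 1 else 0) * f l) = (if j \<in> S then f j else (0::'b::comm_ring_1))"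
  by (simp add: if_distrib[where f="\<lambda>x. x * _"] sum.delta cong: if_cong)

lemma qf_delta: "j \<in> S \<Longrightarrow> finite S \<Longrightarrow> qf S A (\<lambda>i. if i = j then (1::complex) else 0) = A j j"
proof -
  assume a: "j \<in> S" "finite S"
  have "qf S A (\<lambda>i. if i = j then (1::complex) else 0) = (\<Sum>i\<in>S. if i = j then A j j else 0)"
    unfolding qf_def using a by (intro sum.cong refl) (simp add: sum_delta_r)
  then show ?thesis using a by (simp add: sum.delta)
qed

lemma qf_rk1_sum:
  "(\<Sum>i\<in>S. \<Sum>j\<in>S. cnj (v i) * (w i * cnj (w j)) * v j)
     = (\<Sum>i\<in>S. cnj (v i) * w i) * (\<Sum>j\<in>S. cnj (w j) * v j)"
  unfolding sum_product by (intro sum.cong refl) (simp add: mult_ac)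

lemma cnj_sum_conj: "cnj (\<Sum>i\<in>S. cnj (v i) * w i) = (\<Sum>i\<in>S. cnj (w i) * v i)"
  by (simp add: mult.commute)

lemma re_mult_cnj_nonneg: "0 \<le> Re (z * cnj z)"
  by (simp add: complex_mult_cnj)

lemma psd_rk1:
  assumes "\<forall>i. i \<notin> S \<longrightarrow> u i = 0"
  shows "psd_on S (rk1 u)"
proof -
  have "supp_on S (rk1 u)" using assms unfolding supp_on_def rk1_def by auto
  moreover have "\<forall>i j. rk1 u i j = cnj (rk1 u j i)" unfolding rk1_def by simp
  moreover have "0 \<le> Re (\<Sum>i\<in>S. \<Sum>j\<in>S. cnj (v i) * rk1 u i j * v j)" for v
  proof -
    have "(\<Sum>i\<in>S. \<Sum>j\<in>S. cnj (v i) * rk1 u i j * v j)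
        = (\<Sum>i\<in>S. cnj (v i) * u i) * cnj (\<Sum>i\<in>S. cnj (v i) * u i)"
      unfolding rk1_def qf_rk1_sum cnj_sum_conj ..
    then show ?thesis using re_mult_cnj_nonneg by metis
  qed
  ultimately show ?thesis unfolding psd_on_def herm_on_def by blast
qed

lemma psd_supp: "psd_on S A \<Longrightarrow> supp_on S A"
  unfolding psd_on_def herm_on_def by blast

lemma psd_herm: "psd_on S A \<Longrightarrow> A i j = cnj (A j i)"
  unfolding psd_on_def herm_on_def by blast

lemma psd_qf: "psd_on S A \<Longrightarrow> 0 \<le> Re (qf S A v)"
  unfolding psd_on_def qf_def by blast

lemma psd_decomp:
  assumes "finite S" "psd_on S A"
  shows "\<exists>(N::nat) w. (\<forall>t<N. \<forall>i. i \<notin> S \<longrightarrow> w t i = 0) \<and>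
           A = (\<lambda>i j. \<Sum>t<N. w t i * cnj (w t j))"
  using assms
proof (induction S arbitrary: A rule: finite_induct)
  case empty
  then have "A = (\<lambda>i j. 0)" unfolding psd_on_def herm_on_def supp_on_def by auto
  show ?case
  proof (intro exI[where x="0::nat"] exI[where x="\<lambda>_ _. 0::complex"] conjI)
    show "\<forall>t<(0::nat). \<forall>i. i \<notin> {} \<longrightarrow> (\<lambda>_ _. 0::complex) t i = 0" by simp
    show "A = (\<lambda>i j. \<Sum>t<(0::nat). (\<lambda>_ _. 0::complex) t i * cnj ((\<lambda>_ _. 0::complex) t j))"
      using \<open>A = (\<lambda>i j. 0)\<close> by simp
  qed
next
  case (insert a S A)
  have herm: "\<And>i j. A i j = cnj (A j i)" using insert.prems by (rule psd_herm)
  have supp: "\<And>i j. i \<notin> insert a S \<or> j \<notin> insert a S \<Longrightarrow> A i j = 0"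
    using psd_supp[OF insert.prems] unfolding supp_on_def by blast
  have pos: "\<And>v. 0 \<le> Re (qf (insert a S) A v)" using insert.prems by (rule psd_qf)
  define s where "s v = (\<Sum>j\<in>S. A a j * v j)" for v
  have key: "0 \<le> Re (qf S A v + cnj t * s v + cnj (s v) * t + cnj t * A a a * t)" for v t
  proof -
    have "(\<Sum>i\<in>S. cnj (v i) * A i a) = cnj (s v)"
      unfolding s_def by (simp add: herm[of _ a] mult.commute)
    then show ?thesis
      using pos[of "v(a:=t)"] qf_insert[OF insert.hyps, of A v t] unfolding s_def by simp
  qed
  define c where "c = Re (A a a)"
  have caa: "A a a = complex_of_real c"
    using herm[of a a] unfolding c_def by (simp add: complex_eq_iff)
  have c0: "0 \<le> c"
  proof -
    have "qf S A (\<lambda>_. 0) = 0" "s (\<lambda>_. 0) = 0" unfolding qf_def s_def by simp_all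
    then show ?thesis using key[of "\<lambda>_. 0" 1] caa by simp
  qed
  have row0: "A a j = 0" if "c = 0" for j
  proof (cases "j \<in> S")
    case False
    then show ?thesis using supp caa that
      by (cases "j = a") auto
  next
    case True
    define v where "v = (\<lambda>i. if i = j then (1::complex) else 0)"
    have qv: "qf S A v = A j j" unfolding v_def using True insert.hyps(1)
      by (simp add: qf_delta)
    have sv: "s v = A a j" unfolding s_def v_def using True insert.hyps(1)
      by (simp add: sum_delta_r)
    show ?thesis
    proof (rule ccontr)
      assume nz: "A a j \<noteq> 0"
      define z where "z = A a j"
      define R where "R = (Re (A j j) + 1) / (2 * (cmod z)^2)"
      have cz: "cmod z > 0" using nz unfolding z_def by simp
      define t where "t = - complex_of_real R * z"
      have cm: "cmod z * cmod z = Re z * Re z + Im z * Im z"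
        using cmod_power2[of z] by (simp add: power2_eq_square)
      have "Re (cnj t * z) = - R * (cmod z)^2"
        unfolding t_def by (simp add: cm power2_eq_square algebra_simps)
      moreover have "Re (cnj z * t) = - R * (cmod z)^2"
        unfolding t_def by (simp add: cm power2_eq_square algebra_simps)
      moreover have "R * (cmod z)^2 = (Re (A j j) + 1) / 2" unfolding R_def using cz by simp
      moreover have "0 \<le> Re (A j j + cnj t * z + cnj z * t)"
        using key[of v t] qv sv caa that unfolding z_def by simp
      ultimately show False by simp
    qed
  qed
  define r where "r = complex_of_real (sqrt c)"
  define w where "w i = (if c > 0 then A i a / r else 0)" for i
  define A' where "A' = (\<lambda>i j. A i j - w i * cnj (w j))"
  have cr: "c > 0 \<Longrightarrow> r \<noteq> 0 \<and> cnj r = r \<and> r * r = A a a"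
    unfolding r_def using caa c0 by (simp add: of_real_mult[symmetric] del: of_real_mult)
  have wa: "c > 0 \<Longrightarrow> w a = r" unfolding w_def using cr by (auto simp: field_simps)
  have cw: "c > 0 \<Longrightarrow> cnj (w j) = A a j / r" for j
    unfolding w_def using cr herm[of j a] by simp
  have w0: "c = 0 \<Longrightarrow> w i = 0" for i unfolding w_def by simp
  have wout: "i \<notin> insert a S \<Longrightarrow> w i = 0" for i unfolding w_def using supp by simp
  have A'psd: "psd_on S A'"
  proof -
    have "supp_on S A'" unfolding supp_on_def
    proof (intro allI impI)
      fix i j assume h: "i \<notin> S \<or> j \<notin> S"
      show "A' i j = 0"
      proof (cases "c > 0")
        case True
        have "A' a j = 0" for j
        proof -
          have "cnj (w j) = A a j / r" using cw[OF True] .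
          moreover have "r \<noteq> 0" using cr[OF True] by auto
          ultimately show ?thesis unfolding A'_def using wa[OF True] by simp
        qed
        moreover have "A' i a = 0" for i
        proof -
          have "w i = A i a / r" using True unfolding w_def by simp
          moreover have "r \<noteq> 0" "cnj r = r" using cr[OF True] by auto
          ultimately show ?thesis unfolding A'_def using wa[OF True] by simp
        qed
        moreover have "i \<notin> insert a S \<or> j \<notin> insert a S \<Longrightarrow> A' i j = 0"
          unfolding A'_def using supp wout by auto
        ultimately show ?thesis using h by auto
      next
        case False
        then have c: "c = 0" using c0 by simp
        have "A' a j = 0" for j unfolding A'_def using row0[OF c] w0[OF c] by simp
        moreover have "A' i a = 0" for i unfolding A'_def using row0[OF c] w0[OF c] herm[of i a] by simp
        moreover have "i \<notin> insert a S \<or> j \<notin> insert a S \<Longrightarrow> A' i j = 0"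
          unfolding A'_def using supp wout by auto
        ultimately show ?thesis using h by auto
      qed
    qed
    moreover have "\<forall>i j. A' i j = cnj (A' j i)" unfolding A'_def
      by (intro allI, subst herm) simp
    moreover have "0 \<le> Re (qf S A' v)" for v
    proof -
      have e: "qf S A' v = qf S A v - (\<Sum>i\<in>S. cnj (v i) * w i) * (\<Sum>j\<in>S. cnj (w j) * v j)"
        unfolding qf_def A'_def qf_rk1_sum[symmetric]
        by (simp add: algebra_simps sum_subtractf)
      show ?thesis
      proof (cases "c > 0")
        case True
        have e1: "(\<Sum>j\<in>S. cnj (w j) * v j) = s v / r"
          unfolding s_def using cw[OF True] by (simp add: sum_divide_distrib)
        have e2: "(\<Sum>i\<in>S. cnj (v i) * w i) = cnj (s v) / r"
        proof -
          have "(\<Sum>i\<in>S. cnj (v i) * w i) = cnj (\<Sum>j\<in>S. cnj (w j) * v j)"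
            by (simp add: mult.commute)
          then show ?thesis using e1 cr[OF True] by simp
        qed
        define t where "t = - s v / (r * r)"
        have r0: "r \<noteq> 0" and rr: "cnj r = r" and raa: "A a a = r * r" using cr[OF True] by auto
        have ct: "cnj t = - cnj (s v) / (r * r)" unfolding t_def using rr by simp
        have "qf S A' v = qf S A v + cnj t * s v + cnj (s v) * t + cnj t * (r * r) * t"
          unfolding e e1 e2 ct using r0
          by (simp add: t_def field_simps)
        then have "qf S A' v = qf S A v + cnj t * s v + cnj (s v) * t + cnj t * A a a * t"
          using raa by simp
        then show ?thesis using key[of v t] by simp
      next
        case False
        then have "w = (\<lambda>_. 0)" using w0 c0 by auto
        then show ?thesis using key[of v 0] e by simp
      qed
    qed
    ultimately show ?thesis unfolding psd_on_def herm_on_def qf_def by blast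
  qed
  obtain N :: nat and w' where hw': "\<forall>t<N. \<forall>i. i \<notin> S \<longrightarrow> w' t i = 0"
      and A'eq: "A' = (\<lambda>i j. \<Sum>t<N. w' t i * cnj (w' t j))"
    using insert.IH[OF A'psd] by blast
  define W where "W t = (if t < N then w' t else w)" for t
  have "\<forall>t<Suc N. \<forall>i. i \<notin> insert a S \<longrightarrow> W t i = 0"
    unfolding W_def using hw' wout by auto
  moreover have "A = (\<lambda>i j. \<Sum>t<Suc N. W t i * cnj (W t j))"
  proof (intro ext)
    fix i j
    have "A i j = A' i j + w i * cnj (w j)" unfolding A'_def by simp
    also have "\<dots> = (\<Sum>t<Suc N. W t i * cnj (W t j))"
      unfolding A'eq W_def by simp
    finally show "A i j = (\<Sum>t<Suc N. W t i * cnj (W t j))" .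
  qed
  ultimately show ?case by blast
qed



lemma mv: "(\<Sum>l\<in>S. X l * (\<Sum>j\<in>T. Y l j * v j)) = (\<Sum>j\<in>T. (\<Sum>l\<in>S. X l * Y l j) * (v j::complex))"
proof -
  have "(\<Sum>l\<in>S. X l * (\<Sum>j\<in>T. Y l j * v j)) = (\<Sum>l\<in>S. \<Sum>j\<in>T. X l * Y l j * v j)"
    by (simp add: sum_distrib_left mult.assoc)
  also have "\<dots> = (\<Sum>j\<in>T. \<Sum>l\<in>S. X l * Y l j * v j)" by (rule sum.swap)
  also have "\<dots> = (\<Sum>j\<in>T. (\<Sum>l\<in>S. X l * Y l j) * v j)" by (simp add: sum_distrib_right)
  finally show ?thesis .
qed

lemma tri: "mmult_on S (mmult_on S (adj B) A) B i j = (\<Sum>l'\<in>S. \<Sum>l\<in>S. cnj (B l' i) * A l' l * B l j)"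
  unfolding mmult_on_def adj_def sum_distrib_right by (rule sum.swap)

lemma qf_alt: "qf S A v = (\<Sum>i\<in>S. cnj (v i) * (\<Sum>j\<in>S. A i j * v j))"
  unfolding qf_def by (simp add: sum_distrib_left mult.assoc)

lemma qf_conj:
  "qf S (mmult_on S (mmult_on S (adj B) A) B) v = qf S A (\<lambda>l. \<Sum>j\<in>S. B l j * v j)"
proof -
  define u where "u l = (\<Sum>j\<in>S. B l j * v j)" for l
  define Au where "Au l' = (\<Sum>l\<in>S. A l' l * u l)" for l'
  have 1: "(\<Sum>j\<in>S. mmult_on S (mmult_on S (adj B) A) B i j * v j) = (\<Sum>l'\<in>S. cnj (B l' i) * Au l')" for i
  proof -
    have "(\<Sum>j\<in>S. mmult_on S (mmult_on S (adj B) A) B i j * v j)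
        = (\<Sum>l\<in>S. mmult_on S (adj B) A i l * u l)"
      unfolding u_def mv by (simp add: mmult_on_def)
    also have "\<dots> = (\<Sum>l'\<in>S. cnj (B l' i) * Au l')"
      unfolding Au_def mv by (simp add: mmult_on_def adj_def)
    finally show ?thesis .
  qed
  have "qf S (mmult_on S (mmult_on S (adj B) A) B) v = (\<Sum>i\<in>S. cnj (v i) * (\<Sum>l'\<in>S. cnj (B l' i) * Au l'))"
    unfolding qf_alt 1 ..
  also have "\<dots> = (\<Sum>l'\<in>S. (\<Sum>i\<in>S. cnj (v i) * cnj (B l' i)) * Au l')"
    by (rule mv)
  also have "\<dots> = (\<Sum>l'\<in>S. cnj (u l') * Au l')"
    unfolding u_def by (simp add: mult.commute)
  also have "\<dots> = qf S A u" unfolding qf_alt Au_def ..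
  finally show ?thesis unfolding u_def .
qed

lemma psd_conj:
  assumes "psd_on S A" "supp_on S B"
  shows "psd_on S (mmult_on S (mmult_on S (adj B) A) B)"
proof -
  let ?M = "mmult_on S (mmult_on S (adj B) A) B"
  have "supp_on S ?M" using assms(2) unfolding supp_on_def tri by auto
  moreover have "?M i j = cnj (?M j i)" for i j
  proof -
    have "cnj (?M j i) = (\<Sum>l'\<in>S. \<Sum>l\<in>S. B l' j * cnj (A l' l) * cnj (B l i))"
      unfolding tri by simp
    also have "\<dots> = (\<Sum>l'\<in>S. \<Sum>l\<in>S. B l' j * A l l' * cnj (B l i))"
    proof -
      have hc: "\<And>x y. cnj (A x y) = A y x" using psd_herm[OF assms(1)] by (metis complex_cnj_cnj)
      show ?thesis by (simp add: hc)
    qed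
    also have "\<dots> = (\<Sum>l\<in>S. \<Sum>l'\<in>S. B l' j * A l l' * cnj (B l i))"
      by (rule sum.swap)
    also have "\<dots> = ?M i j" unfolding tri by (simp add: mult_ac)
    finally show ?thesis by simp
  qed
  moreover have "0 \<le> Re (qf S ?M v)" for v
    unfolding qf_conj by (rule psd_qf[OF assms(1)])
  ultimately show ?thesis unfolding psd_on_def herm_on_def qf_def by blast
qed

lemma psd_tr:
  assumes "finite S" "psd_on S A"
  shows "tr_on S A = complex_of_real (Re (tr_on S A)) \<and> 0 \<le> Re (tr_on S A)
         \<and> (tr_on S A = 0 \<longrightarrow> A = (\<lambda>_ _. 0))"
proof -
  obtain N :: nat and w where hw: "\<forall>t<N. \<forall>i. i \<notin> S \<longrightarrow> w t i = 0"
      and Aeq: "A = (\<lambda>i j. \<Sum>t<N. w t i * cnj (w t j))"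
    using psd_decomp[OF assms] by blast
  have tr: "tr_on S A = complex_of_real (\<Sum>t<N. \<Sum>i\<in>S. (cmod (w t i))^2)"
  proof -
    have n: "\<And>z. z * cnj z = complex_of_real ((cmod z)^2)" by (metis complex_norm_square)
    show ?thesis unfolding tr_on_def Aeq n of_real_sum by (rule sum.swap)
  qed
  have nn: "0 \<le> (\<Sum>t<N. \<Sum>i\<in>S. (cmod (w t i))^2)" by (intro sum_nonneg) auto
  have z: "A = (\<lambda>_ _. 0)" if "tr_on S A = 0"
  proof -
    have "(\<Sum>t<N. \<Sum>i\<in>S. (cmod (w t i))^2) = 0" using that tr by (metis of_real_eq_0_iff)
    then have "\<forall>t\<in>{..<N}. (\<Sum>i\<in>S. (cmod (w t i))^2) = 0"
      by (subst sum_nonneg_eq_0_iff[symmetric]) (auto intro!: sum_nonneg)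
    then have "\<forall>t<N. \<forall>i\<in>S. (cmod (w t i))^2 = 0"
      using assms(1) by (simp add: sum_nonneg_eq_0_iff)
    then have "\<forall>t<N. \<forall>i. w t i = 0" using hw by auto
    then show ?thesis unfolding Aeq by simp
  qed
  show ?thesis using tr nn z by simp
qed

lemma psd_psd_tr:
  assumes "finite S" "psd_on S A" "psd_on S B"
  shows "0 \<le> Re (tr_on S (mmult_on S A B))"
proof -
  obtain N :: nat and w where Aeq: "A = (\<lambda>i j. \<Sum>t<N. w t i * cnj (w t j))"
    using psd_decomp[OF assms(1,2)] by blast
  have "tr_on S (mmult_on S A B) = (\<Sum>t<N. qf S B (w t))"
  proof -
    have "tr_on S (mmult_on S A B) = (\<Sum>i\<in>S. \<Sum>t<N. \<Sum>j\<in>S. w t i * cnj (w t j) * B j i)"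
      unfolding tr_on_def mmult_on_def Aeq sum_distrib_right by (intro sum.cong refl sum.swap)
    also have "\<dots> = (\<Sum>t<N. \<Sum>i\<in>S. \<Sum>j\<in>S. w t i * cnj (w t j) * B j i)"
      by (rule sum.swap)
    also have "\<dots> = (\<Sum>t<N. \<Sum>j\<in>S. \<Sum>i\<in>S. w t i * cnj (w t j) * B j i)"
      by (intro sum.cong refl sum.swap)
    also have "\<dots> = (\<Sum>t<N. qf S B (w t))"
      unfolding qf_def by (simp add: mult_ac)
    finally show ?thesis .
  qed
  then show ?thesis using psd_qf[OF assms(3)] by (simp add: sum_nonneg)
qed

lemma psd_id: "psd_on S (id_on S)"
proof -
  have "supp_on S (id_on S)" unfolding supp_on_def id_on_def by auto
  moreover have "\<forall>i j. id_on S i j = cnj (id_on S j i)" unfolding id_on_def by auto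
  moreover have "0 \<le> Re (\<Sum>i\<in>S. \<Sum>j\<in>S. cnj (v i) * id_on S i j * v j)" for v
  proof (cases "finite S")
    case True
    have "(\<Sum>i\<in>S. \<Sum>j\<in>S. cnj (v i) * id_on S i j * v j) = (\<Sum>i\<in>S. cnj (v i) * v i)"
      unfolding id_on_def using True
      by (intro sum.cong refl) (simp add: if_distrib[where f="\<lambda>x. _ * x * _"] sum.delta cong: if_cong)
    moreover have "\<And>z. cnj z * z = complex_of_real ((cmod z)^2)"
      by (metis complex_norm_square mult.commute)
    ultimately show ?thesis by (simp add: sum_nonneg)
  qed simp
  ultimately show ?thesis unfolding psd_on_def herm_on_def by blast
qed

lemma psd_zero: "psd_on S (\<lambda>_ _. 0)"
  unfolding psd_on_def herm_on_def supp_on_def by simp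



lemma idx_0: "idx 0 d = {\<lambda>_. 0}"
  unfolding idx_def by auto

lemma idx_Suc: "idx (Suc m) d = (\<lambda>(f,j). f(m:=j)) ` (idx m d \<times> {..<d m})"
proof
  show "idx (Suc m) d \<subseteq> (\<lambda>(f,j). f(m:=j)) ` (idx m d \<times> {..<d m})"
  proof
    fix g assume g: "g \<in> idx (Suc m) d"
    have "g(m:=0) \<in> idx m d" "g m < d m" using g unfolding idx_def by auto
    then show "g \<in> (\<lambda>(f,j). f(m:=j)) ` (idx m d \<times> {..<d m})"
      by (intro image_eqI[where x="(g(m:=0), g m)"]) simp_all
  qed
  show "(\<lambda>(f,j). f(m:=j)) ` (idx m d \<times> {..<d m}) \<subseteq> idx (Suc m) d"
    unfolding idx_def by (auto simp: less_Suc_eq)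
qed

lemma idx_inj: "inj_on (\<lambda>(f,j). f(m:=j)) (idx m d \<times> {..<d m})"
proof (rule inj_onI, clarify)
  fix f j f' j'
  assume h: "f \<in> idx m d" "f' \<in> idx m d" "f(m := j) = f'(m := j')"
  then have "j = j'" by (metis fun_upd_same)
  moreover have "f = f'"
  proof
    fix k show "f k = f' k"
      using h unfolding idx_def by (cases "k = m") (auto dest: fun_cong[where x=k])
  qed
  ultimately show "f = f' \<and> j = j'" by simp
qed

lemma finite_idx: "finite (idx m d)"
  by (induction m) (auto simp: idx_0 idx_Suc)

lemma sum_idx_prod:
  "(\<Sum>f\<in>idx m d. \<Prod>k<m. g k (f k)) = (\<Prod>k<m. \<Sum>j<d k. (g k j :: complex))"
proof (induction m)
  case 0
  then show ?case by (simp add: idx_0)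
next
  case (Suc m)
  have "(\<Sum>f\<in>idx (Suc m) d. \<Prod>k<Suc m. g k (f k))
      = (\<Sum>p\<in>idx m d \<times> {..<d m}. \<Prod>k<Suc m. g k ((case p of (f,j) \<Rightarrow> f(m:=j)) k))"
    unfolding idx_Suc by (subst sum.reindex[OF idx_inj]) (simp add: comp_def)
  also have "\<dots> = (\<Sum>p\<in>idx m d \<times> {..<d m}. (\<Prod>k<m. g k (fst p k)) * g m (snd p))"
  proof (intro sum.cong refl)
    fix p assume "p \<in> idx m d \<times> {..<d m}"
    obtain f j where p: "p = (f, j)" by fastforce
    have "(\<Prod>k<m. g k ((f(m:=j)) k)) = (\<Prod>k<m. g k (f k))" by (intro prod.cong) auto
    then show "(\<Prod>k<Suc m. g k ((case p of (f,j) \<Rightarrow> f(m:=j)) k)) = (\<Prod>k<m. g k (fst p k)) * g m (snd p)"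
      unfolding p by simp
  qed
  also have "\<dots> = (\<Sum>f\<in>idx m d. \<Prod>k<m. g k (f k)) * (\<Sum>j<d m. g m j)"
    unfolding sum_product sum.cartesian_product by (simp add: case_prod_beta)
  also have "\<dots> = (\<Prod>k<Suc m. \<Sum>j<d k. g k j)" using Suc by simp
  finally show ?case .
qed

lemma tensor_cong: "(\<And>l. l < m \<Longrightarrow> E l = E' l) \<Longrightarrow> tensor m d E = tensor m d E'"
  unfolding tensor_def by (intro ext) (auto intro!: prod.cong)

lemma tensor_supp: "supp_on (idx m d) (tensor m d E)"
  unfolding supp_on_def tensor_def by auto

lemma T_mult:
  "mmult_on (idx m d) (tensor m d E) (tensor m d F) = tensor m d (\<lambda>k. mmult_on {..<d k} (E k) (F k))"
proof (intro ext)
  fix a b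
  show "mmult_on (idx m d) (tensor m d E) (tensor m d F) a b = tensor m d (\<lambda>k. mmult_on {..<d k} (E k) (F k)) a b"
  proof (cases "a \<in> idx m d \<and> b \<in> idx m d")
    case True
    have "mmult_on (idx m d) (tensor m d E) (tensor m d F) a b
        = (\<Sum>c\<in>idx m d. \<Prod>k<m. E k (a k) (c k) * F k (c k) (b k))"
      unfolding mmult_on_def tensor_def using True by (intro sum.cong refl) (simp add: prod.distrib)
    also have "\<dots> = (\<Prod>k<m. \<Sum>j<d k. E k (a k) j * F k j (b k))" by (rule sum_idx_prod)
    also have "\<dots> = tensor m d (\<lambda>k. mmult_on {..<d k} (E k) (F k)) a b"
      unfolding tensor_def mmult_on_def using True by simp
    finally show ?thesis .
  next
    case False
    then show ?thesis unfolding mmult_on_def tensor_def by auto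
  qed
qed

lemma T_adj: "adj (tensor m d E) = tensor m d (\<lambda>k. adj (E k))"
proof (intro ext)
  fix a b
  show "adj (tensor m d E) a b = tensor m d (\<lambda>k. adj (E k)) a b"
    unfolding adj_def tensor_def by (simp add: cnj_prod conj_commute)
qed

lemma T_id: "tensor m d (\<lambda>k. id_on {..<d k}) = id_on (idx m d)"
proof (intro ext)
  fix a b
  show "tensor m d (\<lambda>k. id_on {..<d k}) a b = id_on (idx m d) a b"
  proof (cases "a \<in> idx m d \<and> b \<in> idx m d")
    case True
    show ?thesis
    proof (cases "a = b")
      case True
      then show ?thesis using \<open>a \<in> idx m d \<and> b \<in> idx m d\<close>
        unfolding tensor_def id_on_def idx_def by simp
    next
      case False
      then obtain k where k: "a k \<noteq> b k" by auto
      have "k < m"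
      proof (rule ccontr)
        assume "\<not> k < m"
        then have "a k = 0" "b k = 0" using True unfolding idx_def by auto
        then show False using k by simp
      qed
      have "(\<Prod>k<m. id_on {..<d k} (a k) (b k)) = 0"
      proof (rule prod_zero)
        show "\<exists>x\<in>{..<m}. id_on {..<d x} (a x) (b x) = 0"
          using \<open>k < m\<close> k by (intro bexI[of _ k]) (simp_all add: id_on_def)
      qed simp
      then show ?thesis using True False unfolding tensor_def id_on_def by simp
    qed
  next
    case False
    then show ?thesis unfolding tensor_def id_on_def by auto
  qed
qed

definition trest :: "nat \<Rightarrow> (nat \<Rightarrow> nat) \<Rightarrow> (nat \<Rightarrow> nat mat) \<Rightarrow> nat \<Rightarrow> (nat \<Rightarrow> nat) mat" where
  "trest m d E k = (\<lambda>a b. if a \<in> idx m d \<and> b \<in> idx m d then \<Prod>l\<in>{..<m}-{k}. E l (a l) (b l) else 0)"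

lemma tensor_upd:
  assumes "k < m"
  shows "tensor m d (E(k:=X)) a b = X (a k) (b k) * trest m d E k a b"
proof -
  have "(\<Prod>l<m. (E(k:=X)) l (a l) (b l)) = X (a k) (b k) * (\<Prod>l\<in>{..<m}-{k}. (E(k:=X)) l (a l) (b l))"
    using assms by (subst prod.remove[of _ k]) auto
  also have "(\<Prod>l\<in>{..<m}-{k}. (E(k:=X)) l (a l) (b l)) = (\<Prod>l\<in>{..<m}-{k}. E l (a l) (b l))"
    by (intro prod.cong) auto
  finally show ?thesis unfolding tensor_def trest_def by simp
qed

lemma tensor_slot_sum:
  assumes "k < m"
  shows "tensor m d (E(k := (\<lambda>a b. \<Sum>t\<in>T. G t a b))) = (\<lambda>a b. \<Sum>t\<in>T. tensor m d (E(k := G t)) a b)"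
  using assms by (intro ext) (simp add: tensor_upd sum_distrib_right)

lemma tensor_slot_scale:
  assumes "k < m"
  shows "tensor m d (E(k := (\<lambda>a b. c * X a b))) = (\<lambda>a b. c * tensor m d (E(k := X)) a b)"
  using assms by (intro ext) (simp add: tensor_upd)

lemma tensor_slot_zero:
  assumes "k < m"
  shows "tensor m d (E(k := (\<lambda>a b. 0))) = (\<lambda>a b. 0)"
  using assms by (intro ext) (simp add: tensor_upd)

lemma local_op_upd: "local_op m d k K = tensor m d ((\<lambda>l. id_on {..<d l})(k := K))"
  unfolding local_op_def by (rule arg_cong[where f="tensor m d"]) auto

lemma adj_id: "adj (id_on S) = id_on S"
  unfolding adj_def id_on_def by (intro ext) auto

lemma adj_local: "adj (local_op m d k K) = local_op m d k (adj K)"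
  unfolding local_op_def T_adj by (rule arg_cong[where f="tensor m d"]) (auto simp: adj_id)



definition bpc :: "nat \<Rightarrow> (nat \<Rightarrow> nat) \<Rightarrow> (nat \<Rightarrow> nat) mat \<Rightarrow> bool" where
  "bpc m d X \<longleftrightarrow> (\<forall>\<sigma>. separable m d \<sigma> \<longrightarrow> 0 \<le> Re (tr_on (idx m d) (mmult_on (idx m d) X \<sigma>)))"

lemma sep_psd: "separable m d \<sigma> \<Longrightarrow> psd_on (idx m d) \<sigma>"
  unfolding separable_def by blast

lemma sep_id: "separable m d (id_on (idx m d))"
  unfolding separable_def
proof (intro conjI exI[where x="1::nat"] exI[where x="\<lambda>_ k. id_on {..<d k}"])
  show "psd_on (idx m d) (id_on (idx m d))" by (rule psd_id)
  show "\<forall>s<(1::nat). \<forall>k<m. psd_on {..<d k} ((\<lambda>_ k. id_on {..<d k}) s k)" by (simp add: psd_id)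
  show "id_on (idx m d) = (\<lambda>i j. \<Sum>s<(1::nat). tensor m d ((\<lambda>_ k. id_on {..<d k}) s) i j)"
    by (simp add: T_id card_lessThan)
qed

lemma sep_zero: "separable m d (\<lambda>_ _. 0)"
  unfolding separable_def
proof (intro conjI exI[where x="0::nat"] exI[where x="\<lambda>_ k. id_on {..<d k}"])
  show "psd_on (idx m d) (\<lambda>_ _. 0)" by (rule psd_zero)
  show "\<forall>s<(0::nat). \<forall>k<m. psd_on {..<d k} ((\<lambda>_ k. id_on {..<d k}) s k)" by auto
  show "(\<lambda>_ _. 0) = (\<lambda>i j. \<Sum>s<(0::nat). tensor m d ((\<lambda>_ k. id_on {..<d k}) s) i j)"
    by simp
qed

lemma psd_scale:
  assumes "psd_on S A" "0 \<le> c"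
  shows "psd_on S (\<lambda>a b. complex_of_real c * A a b)"
proof -
  have "supp_on S (\<lambda>a b. complex_of_real c * A a b)"
    using psd_supp[OF assms(1)] unfolding supp_on_def by simp
  moreover have "\<forall>i j. complex_of_real c * A i j = cnj (complex_of_real c * A j i)"
    by (intro allI, subst psd_herm[OF assms(1)]) simp
  moreover have "0 \<le> Re (\<Sum>i\<in>S. \<Sum>j\<in>S. cnj (v i) * (complex_of_real c * A i j) * v j)" for v
  proof -
    have "(\<Sum>i\<in>S. \<Sum>j\<in>S. cnj (v i) * (complex_of_real c * A i j) * v j) = complex_of_real c * qf S A v"
      unfolding qf_def by (simp add: sum_distrib_left mult_ac)
    then show ?thesis using psd_qf[OF assms(1), of v] assms(2) by simp
  qed
  ultimately show ?thesis unfolding psd_on_def herm_on_def by blast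
qed

lemma sep_scale:
  assumes "separable m d \<sigma>" "0 \<le> c" "0 < m"
  shows "separable m d (\<lambda>a b. complex_of_real c * \<sigma> a b)"
proof -
  obtain N :: nat and F where F: "\<forall>s<N. \<forall>k<m. psd_on {..<d k} (F s k)"
      and eq: "\<sigma> = (\<lambda>i j. \<Sum>s<N. tensor m d (F s) i j)"
    using assms(1) unfolding separable_def by blast
  define G where "G s = (F s)(0 := (\<lambda>a b. complex_of_real c * F s 0 a b))" for s
  have "\<forall>s<N. \<forall>k<m. psd_on {..<d k} (G s k)"
    unfolding G_def using F assms(2,3) by (auto intro: psd_scale)
  moreover have "(\<lambda>a b. complex_of_real c * \<sigma> a b) = (\<lambda>i j. \<Sum>s<N. tensor m d (G s) i j)"
  proof -
    have "tensor m d (G s) = (\<lambda>a b. complex_of_real c * tensor m d ((F s)(0 := F s 0)) a b)" for s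
      unfolding G_def by (rule tensor_slot_scale[OF assms(3)])
    then show ?thesis unfolding eq by (simp add: sum_distrib_left)
  qed
  moreover have "psd_on (idx m d) (\<lambda>a b. complex_of_real c * \<sigma> a b)"
    using psd_scale[OF sep_psd[OF assms(1)] assms(2)] .
  ultimately show ?thesis unfolding separable_def by blast
qed

lemma local_supp: "supp_on (idx m d) (local_op m d k K)"
  unfolding local_op_def by (rule tensor_supp)

lemma sep_conj:
  assumes "k < m" "supp_on {..<d k} K" "separable m d \<sigma>"
  shows "separable m d (mmult_on (idx m d) (mmult_on (idx m d) (adj (local_op m d k K)) \<sigma>) (local_op m d k K))"
proof -
  let ?S = "idx m d"
  let ?L = "local_op m d k K"
  obtain N :: nat and F where F: "\<forall>s<N. \<forall>k<m. psd_on {..<d k} (F s k)"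
      and eq: "\<sigma> = (\<lambda>i j. \<Sum>s<N. tensor m d (F s) i j)"
    using assms(3) unfolding separable_def by blast
  define G where "G s = (F s)(k := mmult_on {..<d k} (mmult_on {..<d k} (adj K) (F s k)) K)" for s
  have "\<forall>s<N. \<forall>l<m. psd_on {..<d l} (G s l)"
    unfolding G_def using F assms(2) by (auto intro: psd_conj)
  moreover have "mmult_on ?S (mmult_on ?S (adj ?L) \<sigma>) ?L = (\<lambda>i j. \<Sum>s<N. tensor m d (G s) i j)"
  proof -
    have "mmult_on ?S (mmult_on ?S (adj ?L) (tensor m d (F s))) ?L = tensor m d (G s)" if s: "s < N" for s
    proof -
      have "mmult_on ?S (mmult_on ?S (adj ?L) (tensor m d (F s))) ?L
          = tensor m d (\<lambda>l. mmult_on {..<d l} (mmult_on {..<d l}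
               (if l = k then adj K else id_on {..<d l}) (F s l)) (if l = k then K else id_on {..<d l}))"
        unfolding adj_local unfolding local_op_def T_mult
        by (rule arg_cong[where f="tensor m d"]) (auto simp: if_distrib[where f=adj])
      also have "\<dots> = tensor m d (G s)"
      proof (rule tensor_cong)
        fix l assume l: "l < m"
        have supp: "supp_on {..<d l} (F s l)" using F s l psd_supp by blast
        show "mmult_on {..<d l} (mmult_on {..<d l}
               (if l = k then adj K else id_on {..<d l}) (F s l)) (if l = k then K else id_on {..<d l}) = G s l"
          unfolding G_def using supp by (auto simp: mmult_id_left mmult_id_right)
      qed
      finally show ?thesis .
    qed
    then show ?thesis unfolding eq mmult_sum_right mmult_sum_left by auto
  qed
  moreover have "psd_on ?S (mmult_on ?S (mmult_on ?S (adj ?L) \<sigma>) ?L)"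
    using psd_conj[OF sep_psd[OF assms(3)] local_supp] .
  ultimately show ?thesis unfolding separable_def by blast
qed

lemma bp_bpc:
  assumes "0 < m" "block_positive m d X"
  shows "bpc m d X"
  unfolding bpc_def
proof (intro allI impI)
  fix \<sigma> assume sep: "separable m d \<sigma>"
  let ?S = "idx m d"
  have tr: "tr_on ?S \<sigma> = complex_of_real (Re (tr_on ?S \<sigma>))" "0 \<le> Re (tr_on ?S \<sigma>)"
    "tr_on ?S \<sigma> = 0 \<Longrightarrow> \<sigma> = (\<lambda>_ _. 0)"
    using psd_tr[OF finite_idx sep_psd[OF sep]] by auto
  show "0 \<le> Re (tr_on ?S (mmult_on ?S X \<sigma>))"
  proof (cases "tr_on ?S \<sigma> = 0")
    case True
    then show ?thesis using tr(3) by simp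
  next
    case False
    define c where "c = Re (tr_on ?S \<sigma>)"
    have c: "c > 0" using tr False unfolding c_def by (metis less_eq_real_def of_real_0)
    define \<sigma>' where "\<sigma>' = (\<lambda>a b. complex_of_real (1/c) * \<sigma> a b)"
    have sep': "separable m d \<sigma>'" unfolding \<sigma>'_def
      by (rule sep_scale[OF sep _ assms(1)]) (use c in simp)
    have "tr_on ?S \<sigma>' = complex_of_real (1/c) * tr_on ?S \<sigma>"
      unfolding \<sigma>'_def tr_on_def by (simp add: sum_distrib_left)
    then have tr1: "tr_on ?S \<sigma>' = 1" using tr(1) c False unfolding c_def by simp
    have "0 \<le> Re (tr_on ?S (mmult_on ?S X \<sigma>'))"
      using assms(2) sep' tr1 unfolding block_positive_def by blast
    moreover have "tr_on ?S (mmult_on ?S X \<sigma>') = complex_of_real (1/c) * tr_on ?S (mmult_on ?S X \<sigma>)"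
      unfolding \<sigma>'_def tr_on_def mmult_on_def by (simp add: sum_distrib_left mult_ac)
    ultimately show ?thesis using c by (simp add: zero_le_divide_iff)
  qed
qed

lemma supp_id: "supp_on S (id_on S)"
  unfolding supp_on_def id_on_def by auto

lemma local_mult:
  "mmult_on (idx m d) (local_op m d k A) (local_op m d k B) = local_op m d k (mmult_on {..<d k} A B)"
  unfolding local_op_def T_mult
proof (rule tensor_cong)
  fix l assume "l < m"
  show "mmult_on {..<d l} (if l = k then A else id_on {..<d l}) (if l = k then B else id_on {..<d l})
      = (if l = k then mmult_on {..<d k} A B else id_on {..<d l})"
    using mmult_id_left[OF supp_id finite_lessThan] by auto
qed

lemma locc_sum:
  assumes "M \<in> locc m d n"
  shows "(\<lambda>a b. \<Sum>y<n. M y a b) = id_on (idx m d)"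
  using assms
proof (induction rule: locc.induct)
  case (outcome i)
  show ?case
  proof (intro ext)
    fix a b
    have "(\<Sum>y<n. (if y = i then id_on (idx m d) else (\<lambda>_ _. 0)) a b)
        = (\<Sum>y<n. if y = i then id_on (idx m d) a b else 0)"
      by (intro sum.cong) auto
    also have "\<dots> = id_on (idx m d) a b" using outcome by (simp add: sum.delta)
    finally show "(\<Sum>y<n. (if y = i then id_on (idx m d) else (\<lambda>_ _. 0)) a b) = id_on (idx m d) a b" .
  qed
next
  case (step k r K F)
  let ?S = "idx m d"
  let ?L = "\<lambda>j. local_op m d k (K j)"
  have "(\<lambda>a b. \<Sum>y<n. \<Sum>j<r. mmult_on ?S (mmult_on ?S (adj (?L j)) (F j y)) (?L j) a b)
      = (\<lambda>a b. \<Sum>j<r. \<Sum>y<n. mmult_on ?S (mmult_on ?S (adj (?L j)) (F j y)) (?L j) a b)"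
    by (intro ext sum.swap)
  also have "\<dots> = (\<lambda>a b. \<Sum>j<r. mmult_on ?S (mmult_on ?S (adj (?L j)) (\<lambda>a b. \<Sum>y<n. F j y a b)) (?L j) a b)"
    unfolding mmult_sum_right mmult_sum_left ..
  also have "\<dots> = (\<lambda>a b. \<Sum>j<r. local_op m d k (mmult_on {..<d k} (adj (K j)) (K j)) a b)"
  proof (intro ext sum.cong refl)
    fix a b j assume j: "j \<in> {..<r}"
    have "(\<lambda>a b. \<Sum>y<n. F j y a b) = id_on ?S" using step.IH j by blast
    then show "mmult_on ?S (mmult_on ?S (adj (?L j)) (\<lambda>a b. \<Sum>y<n. F j y a b)) (?L j) a b
        = local_op m d k (mmult_on {..<d k} (adj (K j)) (K j)) a b"
      by (simp add: adj_local mmult_id_right[OF local_supp finite_idx] local_mult)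
  qed
  also have "\<dots> = tensor m d ((\<lambda>l. id_on {..<d l})(k := (\<lambda>a b. \<Sum>j<r. mmult_on {..<d k} (adj (K j)) (K j) a b)))"
    unfolding local_op_upd tensor_slot_sum[OF step.hyps(1)] ..
  also have "\<dots> = id_on ?S"
  proof -
    have "(\<lambda>l. id_on {..<d l})(k := id_on {..<d k}) = (\<lambda>l. id_on {..<d l})" by auto
    then show ?thesis unfolding step.hyps(3) by (simp add: T_id)
  qed
  finally show ?case .
qed

lemma sum_tr_id:
  assumes "(\<lambda>a b. \<Sum>z<n. M z a b) = id_on (idx m d)"
  shows "(\<Sum>z<n. tr_on (idx m d) (mmult_on (idx m d) R (M z))) = tr_on (idx m d) R"
proof -
  have "(\<Sum>z<n. tr_on (idx m d) (mmult_on (idx m d) R (M z)))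
      = tr_on (idx m d) (mmult_on (idx m d) R (\<lambda>a b. \<Sum>z<n. M z a b))"
    unfolding mmult_sum_right tr_sum ..
  also have "\<dots> = tr_on (idx m d) R" unfolding assms by (rule tr_mmult_id[OF finite_idx])
  finally show ?thesis .
qed

lemma claim_outcome:
  fixes i n :: nat
  assumes "i < n" "\<forall>i<n. bpc m d (A i)"
  shows "0 \<le> (\<Sum>y<n. Re (tr_on (idx m d) (mmult_on (idx m d) (A y)
            (if y = i then id_on (idx m d) else (\<lambda>_ _. 0)))))"
proof -
  have "(\<Sum>y<n. Re (tr_on (idx m d) (mmult_on (idx m d) (A y) (if y = i then id_on (idx m d) else (\<lambda>_ _. 0)))))
      = (\<Sum>y<n. if y = i then Re (tr_on (idx m d) (mmult_on (idx m d) (A i) (id_on (idx m d)))) else 0)"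
    by (intro sum.cong) auto
  also have "\<dots> = Re (tr_on (idx m d) (mmult_on (idx m d) (A i) (id_on (idx m d))))"
    using assms(1) by (simp add: sum.delta)
  also have "0 \<le> \<dots>" using assms sep_id unfolding bpc_def by blast
  finally show ?thesis .
qed

lemma claim_bpA:
  assumes "k < m" "supp_on {..<d k} K" "bpc m d X"
  shows "bpc m d (mmult_on (idx m d) (mmult_on (idx m d) (local_op m d k K) X) (adj (local_op m d k K)))"
  unfolding bpc_def
proof (intro allI impI)
  fix \<sigma> assume sep: "separable m d \<sigma>"
  let ?S = "idx m d"
  let ?L = "local_op m d k K"
  have "tr_on ?S (mmult_on ?S (mmult_on ?S (mmult_on ?S ?L X) (adj ?L)) \<sigma>)
      = tr_on ?S (mmult_on ?S X (mmult_on ?S (mmult_on ?S (adj ?L) \<sigma>) ?L))"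
    unfolding conj_tr[OF finite_idx] ..
  moreover have "separable m d (mmult_on ?S (mmult_on ?S (adj ?L) \<sigma>) ?L)"
    using sep_conj[OF assms(1,2) sep] .
  ultimately show "0 \<le> Re (tr_on ?S (mmult_on ?S (mmult_on ?S (mmult_on ?S ?L X) (adj ?L)) \<sigma>))"
    using assms(3) unfolding bpc_def by simp
qed

lemma claim_step:
  fixes n r :: nat
  assumes k: "k < m" and K: "\<forall>j<r. supp_on {..<d k} (K j)"
    and IH: "\<forall>j<r. \<forall>A. (\<forall>i<n. bpc m d (A i)) \<longrightarrow> 0 \<le> (\<Sum>i<n. Re (tr_on (idx m d) (mmult_on (idx m d) (A i) (F j i))))"
    and M': "M' = (\<lambda>i a b. \<Sum>j<r. mmult_on (idx m d) (mmult_on (idx m d) (adj (local_op m d k (K j))) (F j i)) (local_op m d k (K j)) a b)"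
  shows "\<forall>A. (\<forall>i<n. bpc m d (A i)) \<longrightarrow> 0 \<le> (\<Sum>i<n. Re (tr_on (idx m d) (mmult_on (idx m d) (A i) (M' i))))"
proof (intro allI impI)
  let ?S = "idx m d"
  fix A assume A: "\<forall>i<n. bpc m d (A i)"
  define L where "L j = local_op m d k (K j)" for j
  define A' where "A' j i = mmult_on ?S (mmult_on ?S (L j) (A i)) (adj (L j))" for j i
  have e: "tr_on ?S (mmult_on ?S (A i) (M' i)) = (\<Sum>j<r. tr_on ?S (mmult_on ?S (A' j i) (F j i)))" for i
    unfolding M' mmult_sum_right tr_sum A'_def L_def conj_tr[OF finite_idx] ..
  have "(\<Sum>i<n. Re (tr_on ?S (mmult_on ?S (A i) (M' i))))
      = (\<Sum>j<r. \<Sum>i<n. Re (tr_on ?S (mmult_on ?S (A' j i) (F j i))))"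
    unfolding e Re_sum by (rule sum.swap)
  also have "0 \<le> \<dots>"
  proof (rule sum_nonneg)
    fix j assume j: "j \<in> {..<r}"
    then have jr: "j < r" by simp
    have bp: "\<forall>i<n. bpc m d (A' j i)"
    proof (intro allI impI)
      fix i assume "i < n"
      then show "bpc m d (A' j i)"
        unfolding A'_def L_def using claim_bpA[OF k] K jr A by blast
    qed
    show "0 \<le> (\<Sum>i<n. Re (tr_on ?S (mmult_on ?S (A' j i) (F j i))))"
      using IH jr bp by blast
  qed
  finally show "0 \<le> (\<Sum>i<n. Re (tr_on ?S (mmult_on ?S (A i) (M' i))))" .
qed

lemma locc_claim:
  assumes "M \<in> locc m d n"
  shows "\<forall>A. (\<forall>i<n. bpc m d (A i)) \<longrightarrow> 0 \<le> (\<Sum>i<n. Re (tr_on (idx m d) (mmult_on (idx m d) (A i) (M i))))"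
  using assms
proof (induction rule: locc.induct)
  case (outcome i)
  then show ?case using claim_outcome by blast
next
  case (step k r K F)
  have IH: "\<forall>j<r. \<forall>A. (\<forall>i<n. bpc m d (A i)) \<longrightarrow> 0 \<le> (\<Sum>i<n. Re (tr_on (idx m d) (mmult_on (idx m d) (A i) (F j i))))"
    using step.IH by simp
  show ?case by (rule claim_step[OF step.hyps(1,2) IH refl])
qed



definition unitv :: "nat \<Rightarrow> (nat \<Rightarrow> complex) \<Rightarrow> bool" where
  "unitv n u \<longleftrightarrow> (\<forall>i. n \<le> i \<longrightarrow> u i = 0) \<and> (\<Sum>i<n. cnj (u i) * u i) = 1"

lemma cnj_self: "cnj z * z = complex_of_real ((cmod z)^2)"
  by (metis complex_norm_square mult.commute)

lemma mmult_scale_right: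
  "mmult_on S D (\<lambda>a b. c * X a b) = (\<lambda>a b. c * mmult_on S D X a b)"
  unfolding mmult_on_def by (simp add: sum_distrib_left mult_ac)

lemma tr_scale: "tr_on S (\<lambda>a b. c * X a b) = c * tr_on S X"
  unfolding tr_on_def by (simp add: sum_distrib_left)

lemma extract_step:
  fixes j :: nat
  assumes j: "j < m" and G: "\<forall>l<m. psd_on {..<d l} (G l)"
    and neg: "Re (tr_on (idx m d) (mmult_on (idx m d) D (tensor m d G))) < 0"
  shows "\<exists>u. unitv (d j) u \<and> Re (tr_on (idx m d) (mmult_on (idx m d) D (tensor m d (G(j := rk1 u))))) < 0"
proof -
  let ?S = "idx m d"
  obtain N :: nat and w where hw: "\<forall>t<N. \<forall>i. i \<notin> {..<d j} \<longrightarrow> w t i = 0"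
      and Gj: "G j = (\<lambda>a b. \<Sum>t<N. w t a * cnj (w t b))"
    using psd_decomp[OF finite_lessThan] G j by blast
  have "tensor m d G = tensor m d (G(j := (\<lambda>a b. \<Sum>t<N. rk1 (w t) a b)))"
    unfolding rk1_def Gj[symmetric] by simp
  also have "\<dots> = (\<lambda>a b. \<Sum>t<N. tensor m d (G(j := rk1 (w t))) a b)"
    by (rule tensor_slot_sum[OF j])
  finally have eqT: "tensor m d G = (\<lambda>a b. \<Sum>t<N. tensor m d (G(j := rk1 (w t))) a b)" .
  have "tr_on ?S (mmult_on ?S D (tensor m d G)) = (\<Sum>t<N. tr_on ?S (mmult_on ?S D (tensor m d (G(j := rk1 (w t))))))"
    unfolding eqT mmult_sum_right tr_sum ..
  then have "(\<Sum>t<N. Re (tr_on ?S (mmult_on ?S D (tensor m d (G(j := rk1 (w t))))))) < 0"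
    using neg by (simp add: Re_sum)
  then obtain t where t: "t < N" and negt: "Re (tr_on ?S (mmult_on ?S D (tensor m d (G(j := rk1 (w t)))))) < 0"
    by (metis (no_types, lifting) lessThan_iff not_less sum_nonneg)
  define v where "v = w t"
  have vsupp: "\<And>i. d j \<le> i \<Longrightarrow> v i = 0" using hw t unfolding v_def by auto
  define \<nu> where "\<nu> = (\<Sum>i<d j. (cmod (v i))^2)"
  have \<nu>0: "0 \<le> \<nu>" unfolding \<nu>_def by (intro sum_nonneg) auto
  show ?thesis
  proof (cases "\<nu> = 0")
    case True
    then have "\<forall>i\<in>{..<d j}. (cmod (v i))^2 = 0"
      unfolding \<nu>_def by (subst sum_nonneg_eq_0_iff[symmetric]) auto
    then have "\<forall>i. v i = 0" using vsupp by (metis lessThan_iff not_less norm_eq_zero power_eq_0_iff)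
    then have "rk1 v = (\<lambda>a b. 0)" unfolding rk1_def by simp
    then have "tensor m d (G(j := rk1 (w t))) = (\<lambda>a b. 0)"
      unfolding v_def using tensor_slot_zero[OF j] by simp
    then show ?thesis using negt by simp
  next
    case False
    then have \<nu>p: "0 < \<nu>" using \<nu>0 by simp
    define s where "s = sqrt \<nu>"
    have sp: "0 < s" "s * s = \<nu>" unfolding s_def using \<nu>p by auto
    define u where "u i = v i / complex_of_real s" for i
    have rk: "rk1 v = (\<lambda>a b. complex_of_real \<nu> * rk1 u a b)"
    proof (intro ext)
      fix a b
      have "complex_of_real \<nu> = complex_of_real s * complex_of_real s"
        using sp(2) by (metis of_real_mult)
      then show "rk1 v a b = complex_of_real \<nu> * rk1 u a b"
        unfolding rk1_def u_def using sp by (simp add: field_simps)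
    qed
    have "tensor m d (G(j := rk1 (w t))) = (\<lambda>a b. complex_of_real \<nu> * tensor m d (G(j := rk1 u)) a b)"
      unfolding v_def[symmetric] rk by (rule tensor_slot_scale[OF j])
    then have "tr_on ?S (mmult_on ?S D (tensor m d (G(j := rk1 (w t)))))
        = complex_of_real \<nu> * tr_on ?S (mmult_on ?S D (tensor m d (G(j := rk1 u))))"
      by (simp add: mmult_scale_right tr_scale)
    then have neg2: "Re (tr_on ?S (mmult_on ?S D (tensor m d (G(j := rk1 u))))) < 0"
      using negt \<nu>p by (simp add: mult_less_0_iff)
    have "unitv (d j) u"
      unfolding unitv_def
    proof
      show "\<forall>i. d j \<le> i \<longrightarrow> u i = 0" unfolding u_def using vsupp by simp
      have "(\<Sum>i<d j. cnj (u i) * u i) = (\<Sum>i<d j. cnj (v i) * v i) / complex_of_real \<nu>"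
        unfolding u_def using sp by (simp add: sum_divide_distrib field_simps of_real_mult[symmetric] del: of_real_mult)
      also have "(\<Sum>i<d j. cnj (v i) * v i) = complex_of_real \<nu>"
        unfolding \<nu>_def cnj_self of_real_sum ..
      finally show "(\<Sum>i<d j. cnj (u i) * u i) = 1" using \<nu>p by simp
    qed
    then show ?thesis using neg2 by blast
  qed
qed

lemma unitv_supp: "unitv n u \<Longrightarrow> \<forall>i. i \<notin> {..<n} \<longrightarrow> u i = 0"
  unfolding unitv_def by auto

lemma extract_vecs:
  assumes G: "\<forall>l<m. psd_on {..<d l} (G l)"
    and neg: "Re (tr_on (idx m d) (mmult_on (idx m d) D (tensor m d G))) < 0"
  shows "\<exists>U. (\<forall>l<m. unitv (d l) (U l)) \<and>
           Re (tr_on (idx m d) (mmult_on (idx m d) D (tensor m d (\<lambda>l. rk1 (U l))))) < 0"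
proof -
  let ?S = "idx m d"
  have "\<forall>j\<le>m. \<exists>G'. (\<forall>l<m. psd_on {..<d l} (G' l)) \<and> (\<forall>l<j. \<exists>u. unitv (d l) u \<and> G' l = rk1 u)
           \<and> Re (tr_on ?S (mmult_on ?S D (tensor m d G'))) < 0"
  proof (intro allI impI)
    fix j :: nat assume "j \<le> m"
    then show "\<exists>G'. (\<forall>l<m. psd_on {..<d l} (G' l)) \<and> (\<forall>l<j. \<exists>u. unitv (d l) u \<and> G' l = rk1 u)
           \<and> Re (tr_on ?S (mmult_on ?S D (tensor m d G'))) < 0"
    proof (induction j)
      case 0
      then show ?case using G neg by blast
    next
      case (Suc j)
      then obtain G' where G'1: "\<forall>l<m. psd_on {..<d l} (G' l)"
          and G'2: "\<forall>l<j. \<exists>u. unitv (d l) u \<and> G' l = rk1 u"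
          and G'3: "Re (tr_on ?S (mmult_on ?S D (tensor m d G'))) < 0" by auto
      have jm: "j < m" using Suc by simp
      obtain u where u: "unitv (d j) u" and nu: "Re (tr_on ?S (mmult_on ?S D (tensor m d (G'(j := rk1 u))))) < 0"
        using extract_step[OF jm G'1 G'3] by blast
      have "\<forall>l<m. psd_on {..<d l} ((G'(j := rk1 u)) l)"
        using G'1 psd_rk1[OF unitv_supp[OF u]] by auto
      moreover have "\<forall>l<Suc j. \<exists>u'. unitv (d l) u' \<and> (G'(j := rk1 u)) l = rk1 u'"
        using G'2 u by (auto simp: less_Suc_eq)
      ultimately show ?case using nu by blast
    qed
  qed
  then obtain G' where G'2: "\<forall>l<m. \<exists>u. unitv (d l) u \<and> G' l = rk1 u"
      and G'3: "Re (tr_on ?S (mmult_on ?S D (tensor m d G'))) < 0" by blast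
  define U where "U l = (SOME u. unitv (d l) u \<and> G' l = rk1 u)" for l
  have U: "\<forall>l<m. unitv (d l) (U l) \<and> G' l = rk1 (U l)"
    unfolding U_def using G'2 by (metis (mono_tags, lifting) someI_ex)
  then have "tensor m d G' = tensor m d (\<lambda>l. rk1 (U l))" by (intro tensor_cong) auto
  then show ?thesis using U G'3 by auto
qed



lemma rk1_supp: "unitv n u \<Longrightarrow> supp_on {..<n} (rk1 u)"
  unfolding unitv_def supp_on_def rk1_def by auto

lemma rk1_adj: "adj (rk1 u) = rk1 u"
  unfolding adj_def rk1_def by (intro ext) simp

lemma rk1_idem: "unitv n u \<Longrightarrow> mmult_on {..<n} (rk1 u) (rk1 u) = rk1 u"
proof (intro ext)
  fix a b assume u: "unitv n u"
  have "mmult_on {..<n} (rk1 u) (rk1 u) a b = u a * cnj (u b) * (\<Sum>l<n. cnj (u l) * u l)"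
    unfolding mmult_on_def rk1_def by (simp add: sum_distrib_left mult_ac)
  then show "mmult_on {..<n} (rk1 u) (rk1 u) a b = rk1 u a b"
    using u unfolding unitv_def rk1_def by simp
qed

lemma kraus2:
  assumes u: "unitv n u"
  defines "K \<equiv> (\<lambda>t::nat. if t = 0 then rk1 u else (\<lambda>a b. id_on {..<n} a b - rk1 u a b))"
  shows "(\<lambda>a b. \<Sum>t<2. mmult_on {..<n} (adj (K t)) (K t) a b) = id_on {..<n}"
    and "\<forall>t<2. supp_on {..<n} (K t)"
proof -
  let ?P = "rk1 u"
  let ?Q = "\<lambda>a b. id_on {..<n} a b - rk1 u a b"
  have sP: "supp_on {..<n} ?P" by (rule rk1_supp[OF u])
  have sQ: "supp_on {..<n} ?Q" using sP unfolding supp_on_def id_on_def by auto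
  have aQ: "adj ?Q = ?Q" unfolding adj_def id_on_def rk1_def by (intro ext) auto
  have PP: "mmult_on {..<n} ?P ?P = ?P" by (rule rk1_idem[OF u])
  have QQ: "mmult_on {..<n} ?Q ?Q = ?Q"
  proof -
    have "mmult_on {..<n} ?P ?Q = (\<lambda>a b. 0)"
      unfolding mmult_diff_right mmult_id_right[OF sP finite_lessThan] PP by simp
    then show ?thesis
      unfolding mmult_diff_left[of _ "id_on {..<n}" "rk1 u"] mmult_id_left[OF sQ finite_lessThan]
      by simp
  qed
  show "(\<lambda>a b. \<Sum>t<2. mmult_on {..<n} (adj (K t)) (K t) a b) = id_on {..<n}"
    unfolding K_def by (simp add: numeral_2_eq_2 rk1_adj aQ PP QQ)
  show "\<forall>t<2. supp_on {..<n} (K t)" unfolding K_def using sP sQ by simp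
qed

lemma conj_local_T:
  assumes k: "k < m" and U: "\<forall>l<m. unitv (d l) (U l)"
  shows "mmult_on (idx m d) (mmult_on (idx m d) (adj (local_op m d k (rk1 (U k))))
            (tensor m d (\<lambda>l. if l < Suc k then id_on {..<d l} else rk1 (U l))))
            (local_op m d k (rk1 (U k)))
       = tensor m d (\<lambda>l. if l < k then id_on {..<d l} else rk1 (U l))"
  unfolding adj_local rk1_adj unfolding local_op_def T_mult
proof (rule tensor_cong)
  fix l assume l: "l < m"
  have sU: "supp_on {..<d l} (rk1 (U l))" using rk1_supp U l by blast
  have sI: "supp_on {..<d l} (id_on {..<d l})" by (rule supp_id)
  consider "l = k" | "l < k" | "k < l" by linarith
  then show "mmult_on {..<d l} (mmult_on {..<d l} (if l = k then rk1 (U k) else id_on {..<d l})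
          (if l < Suc k then id_on {..<d l} else rk1 (U l))) (if l = k then rk1 (U k) else id_on {..<d l})
       = (if l < k then id_on {..<d l} else rk1 (U l))"
  proof cases
    case 1
    have Ul: "unitv (d k) (U k)" using U k by blast
    show ?thesis
      by (simp add: 1 mmult_id_right[OF rk1_supp[OF Ul] finite_lessThan] rk1_idem[OF Ul])
  next
    case 2
    then show ?thesis by (simp add: mmult_id_right[OF sI finite_lessThan])
  next
    case 3
    then show ?thesis
      by (simp add: mmult_id_right[OF sU finite_lessThan] mmult_id_left[OF sU finite_lessThan])
  qed
qed

lemma protocol:
  fixes n i x :: nat
  assumes i: "i < n" and x: "x < n" and ix: "i \<noteq> x" and U: "\<forall>l<m. unitv (d l) (U l)"
  shows "\<exists>M\<in>locc m d n. M i = tensor m d (\<lambda>l. rk1 (U l)) \<and> (\<forall>y. y \<noteq> i \<and> y \<noteq> x \<longrightarrow> M y = (\<lambda>_ _. 0))"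
proof -
  let ?S = "idx m d"
  define T where "T q = tensor m d (\<lambda>l. if l < q then id_on {..<d l} else rk1 (U l))" for q
  define Ox where "Ox = (\<lambda>y. if y = x then id_on (idx m d) else (\<lambda>_ _. (0::complex)))"
  have Ox: "Ox \<in> locc m d n" unfolding Ox_def by (rule locc.outcome[OF x])
  have main: "j \<le> m \<Longrightarrow> \<exists>M\<in>locc m d n. M i = T (m - j) \<and> (\<forall>y. y \<noteq> i \<and> y \<noteq> x \<longrightarrow> M y = (\<lambda>_ _. 0))" for j
  proof (induction j)
    case 0
    have "T m = tensor m d (\<lambda>l. id_on {..<d l})" unfolding T_def by (rule tensor_cong) simp
    then have "T m = id_on ?S" by (simp add: T_id)
    then show ?case
      by (intro bexI[OF _ locc.outcome[OF i]]) auto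
  next
    case (Suc j)
    then obtain M where M: "M \<in> locc m d n" and Mi: "M i = T (m - j)"
      and My: "\<forall>y. y \<noteq> i \<and> y \<noteq> x \<longrightarrow> M y = (\<lambda>_ _. 0)" by auto
    define k where "k = m - Suc j"
    have k: "k < m" "m - j = Suc k" using Suc.prems unfolding k_def by auto
    define K where "K = (\<lambda>t::nat. if t = 0 then rk1 (U k) else (\<lambda>a b. id_on {..<d k} a b - rk1 (U k) a b))"
    define F where "F = (\<lambda>t::nat. if t = 0 then M else Ox)"
    have Uk: "unitv (d k) (U k)" using U k by blast
    have Fl: "\<forall>t<2. F t \<in> locc m d n" unfolding F_def using M Ox by simp
    define M' where "M' = (\<lambda>i a b. \<Sum>t<2. mmult_on ?S (mmult_on ?S (adj (local_op m d k (K t))) (F t i)) (local_op m d k (K t)) a b)"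
    have M'l: "M' \<in> locc m d n"
      unfolding M'_def
      by (rule locc.step[OF k(1) _ _ Fl]) (use kraus2[OF Uk] in \<open>simp_all add: K_def\<close>)
    have M'e: "M' y = (\<lambda>a b. mmult_on ?S (mmult_on ?S (adj (local_op m d k (rk1 (U k)))) (M y)) (local_op m d k (rk1 (U k))) a b
           + mmult_on ?S (mmult_on ?S (adj (local_op m d k (K 1))) (Ox y)) (local_op m d k (K 1)) a b)" for y
      unfolding M'_def F_def by (simp add: numeral_2_eq_2 K_def)
    have "M' i = T k"
    proof -
      have "Ox i = (\<lambda>_ _. 0)" unfolding Ox_def using ix by simp
      then have "M' i = mmult_on ?S (mmult_on ?S (adj (local_op m d k (rk1 (U k)))) (T (Suc k))) (local_op m d k (rk1 (U k)))"
        unfolding M'e Mi k(2) by simp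
      also have "\<dots> = T k" unfolding T_def by (rule conj_local_T[OF k(1) U])
      finally show ?thesis .
    qed
    moreover have "\<forall>y. y \<noteq> i \<and> y \<noteq> x \<longrightarrow> M' y = (\<lambda>_ _. 0)"
    proof (intro allI impI)
      fix y assume y: "y \<noteq> i \<and> y \<noteq> x"
      then have "Ox y = (\<lambda>_ _. 0)" "M y = (\<lambda>_ _. 0)" unfolding Ox_def using My by auto
      then show "M' y = (\<lambda>_ _. 0)" unfolding M'e by simp
    qed
    moreover have "m - Suc j = k" unfolding k_def ..
    ultimately show ?case using M'l by auto
  qed
  obtain M where "M \<in> locc m d n" "M i = T 0" "\<forall>y. y \<noteq> i \<and> y \<noteq> x \<longrightarrow> M y = (\<lambda>_ _. 0)"
    using main[of m] by auto
  moreover have "T 0 = tensor m d (\<lambda>l. rk1 (U l))" unfolding T_def by simp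
  ultimately show ?thesis by auto
qed



lemma mmult_scale_left:
  "mmult_on S (\<lambda>a b. c * X a b) D = (\<lambda>a b. c * mmult_on S X D a b)"
  unfolding mmult_on_def by (simp add: sum_distrib_left mult_ac)

lemma tr_D:
  "tr_on S (mmult_on S (\<lambda>a b. complex_of_real c1 * A a b - complex_of_real c2 * B a b) M)
   = complex_of_real c1 * tr_on S (mmult_on S A M) - complex_of_real c2 * tr_on S (mmult_on S B M)"
  unfolding tr_on_def mmult_on_def
  by (simp add: algebra_simps sum_subtractf sum_distrib_left)

lemma tr_R:
  "tr_on S (mmult_on S (\<lambda>a b. \<Sum>y<n. complex_of_real (\<eta> y) * \<rho> y a b) M)
   = (\<Sum>y<n. complex_of_real (\<eta> y) * tr_on S (mmult_on S (\<rho> y) M))"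
  unfolding mmult_sum_left tr_sum mmult_scale_left tr_scale ..

lemma success_D:
  fixes n x :: nat
  assumes sum: "(\<lambda>a b. \<Sum>y<n. M y a b) = id_on (idx m d)"
    and trx: "tr_on (idx m d) (\<rho> x) = 1"
  shows "(\<Sum>y<n. Re (tr_on (idx m d) (mmult_on (idx m d)
            (\<lambda>a b. complex_of_real (\<eta> x) * \<rho> x a b - complex_of_real (\<eta> y) * \<rho> y a b) (M y))))
         = \<eta> x - success m d n \<eta> \<rho> M"
proof -
  let ?S = "idx m d"
  have "(\<Sum>y<n. Re (tr_on ?S (mmult_on ?S
            (\<lambda>a b. complex_of_real (\<eta> x) * \<rho> x a b - complex_of_real (\<eta> y) * \<rho> y a b) (M y))))
      = (\<Sum>y<n. \<eta> x * Re (tr_on ?S (mmult_on ?S (\<rho> x) (M y))) - \<eta> y * Re (tr_on ?S (mmult_on ?S (\<rho> y) (M y))))"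
    unfolding tr_D by simp
  also have "\<dots> = \<eta> x * Re (\<Sum>y<n. tr_on ?S (mmult_on ?S (\<rho> x) (M y))) - success m d n \<eta> \<rho> M"
    unfolding success_def sum_subtractf Re_sum sum_distrib_left ..
  also have "\<dots> = \<eta> x - success m d n \<eta> \<rho> M"
    unfolding sum_tr_id[OF sum] trx by simp
  finally show ?thesis .
qed

lemma psd_cnj: "psd_on S A \<Longrightarrow> cnj (A b a) = A a b"
  using psd_herm[of S A a b] by simp

lemma success_le_1:
  fixes n :: nat
  assumes ens: "ensemble m d n \<eta> \<rho>" and M: "M \<in> locc m d n"
  shows "success m d n \<eta> \<rho> M \<le> 1"
proof -
  let ?S = "idx m d"
  have eta: "\<forall>y<n. 0 < \<eta> y" and st: "\<forall>y<n. psd_on ?S (\<rho> y) \<and> tr_on ?S (\<rho> y) = 1"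
    and s1: "(\<Sum>y<n. \<eta> y) = 1"
    using ens unfolding ensemble_def is_state_def by auto
  define R where "R = (\<lambda>a b. \<Sum>y<n. complex_of_real (\<eta> y) * \<rho> y a b)"
  define A where "A z = (\<lambda>a b. complex_of_real 1 * R a b - complex_of_real (\<eta> z) * \<rho> z a b)" for z
  have bpA: "\<forall>z<n. bpc m d (A z)"
  proof (intro allI impI)
    fix z assume z: "z < n"
    show "bpc m d (A z)" unfolding bpc_def
    proof (intro allI impI)
      fix \<sigma> assume sep: "separable m d \<sigma>"
      have pos: "0 \<le> Re (tr_on ?S (mmult_on ?S (\<rho> y) \<sigma>))" if "y < n" for y
        using psd_psd_tr[OF finite_idx _ sep_psd[OF sep]] st that by blast
      have "Re (tr_on ?S (mmult_on ?S (A z) \<sigma>))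
          = (\<Sum>y<n. \<eta> y * Re (tr_on ?S (mmult_on ?S (\<rho> y) \<sigma>))) - \<eta> z * Re (tr_on ?S (mmult_on ?S (\<rho> z) \<sigma>))"
        unfolding A_def tr_D R_def tr_R by (simp add: Re_sum)
      also have "\<dots> = (\<Sum>y\<in>{..<n}-{z}. \<eta> y * Re (tr_on ?S (mmult_on ?S (\<rho> y) \<sigma>)))"
        using z by (simp add: sum.remove)
      also have "0 \<le> \<dots>" using pos eta by (intro sum_nonneg) (simp add: less_imp_le)
      finally show "0 \<le> Re (tr_on ?S (mmult_on ?S (A z) \<sigma>))" .
    qed
  qed
  have "0 \<le> (\<Sum>z<n. Re (tr_on ?S (mmult_on ?S (A z) (M z))))"
    using locc_claim[OF M] bpA by blast
  also have "(\<Sum>z<n. Re (tr_on ?S (mmult_on ?S (A z) (M z))))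
      = Re (\<Sum>z<n. tr_on ?S (mmult_on ?S R (M z))) - success m d n \<eta> \<rho> M"
    unfolding A_def tr_D success_def by (simp add: Re_sum sum_subtractf)
  also have "(\<Sum>z<n. tr_on ?S (mmult_on ?S R (M z))) = tr_on ?S R"
    by (rule sum_tr_id[OF locc_sum[OF M]])
  also have "tr_on ?S R = 1"
  proof -
    have "tr_on ?S R = (\<Sum>y<n. complex_of_real (\<eta> y) * tr_on ?S (\<rho> y))"
      unfolding R_def tr_on_def by (subst sum.swap) (simp add: sum_distrib_left)
    also have "\<dots> = (\<Sum>y<n. complex_of_real (\<eta> y))" using st by simp
    also have "\<dots> = 1" using s1 by (metis of_real_1 of_real_sum)
    finally show ?thesis .
  qed
  finally show ?thesis by simp
qed

theorem theorem1:
  fixes m n :: nat and d :: "nat \<Rightarrow> nat" and \<eta> :: "nat \<Rightarrow> real"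
    and \<rho> :: "nat \<Rightarrow> (nat \<Rightarrow> nat) mat" and x :: nat
  assumes "m \<ge> 2" and "\<forall>k<m. d k \<ge> 2"
    and "ensemble m d n \<eta> \<rho>"
    and "x < n"
  shows "(p_L m d n \<eta> \<rho> = \<eta> x \<longleftrightarrow>
           (\<forall>i<n. block_positive m d (\<lambda>a b. complex_of_real (\<eta> x) * \<rho> x a b
                                           - complex_of_real (\<eta> i) * \<rho> i a b)))
         \<and> (p_L m d n \<eta> \<rho> = \<eta> x \<longrightarrow> p_L m d n \<eta> \<rho> = p_SEP m d n \<eta> \<rho>)"
proof -
  let ?S = "idx m d"
  define D where "D y = (\<lambda>a b. complex_of_real (\<eta> x) * \<rho> x a b - complex_of_real (\<eta> y) * \<rho> y a b)" for y
  have m0: "0 < m" using assms(1) by simp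
  have ens: "ensemble m d n \<eta> \<rho>" by fact
  have x: "x < n" by fact
  have eta: "\<forall>y<n. 0 < \<eta> y" and st: "\<forall>y<n. psd_on ?S (\<rho> y) \<and> tr_on ?S (\<rho> y) = 1"
    using ens unfolding ensemble_def is_state_def by auto
  have trx: "tr_on ?S (\<rho> x) = 1" using st x by blast
  define Mx where "Mx = (\<lambda>j. if j = x then id_on ?S else (\<lambda>_ _. (0::complex)))"
  have Mxl: "Mx \<in> locc m d n" unfolding Mx_def by (rule locc.outcome[OF x])
  have sMx: "success m d n \<eta> \<rho> Mx = \<eta> x"
  proof -
    have "success m d n \<eta> \<rho> Mx = (\<Sum>y<n. if y = x then \<eta> x else 0)"
      unfolding success_def Mx_def
      by (intro sum.cong refl) (simp add: tr_mmult_id[OF finite_idx] trx)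
    then show ?thesis using x by simp
  qed
  have Mxs: "sep_measurement m d n Mx"
    unfolding sep_measurement_def measurement_def
    using locc_sum[OF Mxl] psd_id psd_zero sep_id sep_zero unfolding Mx_def by auto
  have Lne: "Mx \<in> {M. locc_measurement m d n M}" using Mxl unfolding locc_measurement_def by simp
  have Sne: "Mx \<in> {M. sep_measurement m d n M}" using Mxs by simp
  have bddL: "bdd_above (success m d n \<eta> \<rho> ` {M. locc_measurement m d n M})"
    unfolding locc_measurement_def using success_le_1[OF ens]
    by (intro bdd_aboveI[where M=1]) auto
  show ?thesis
  proof (cases "\<forall>i<n. block_positive m d (D i)")
    case True
    then have bp: "\<forall>i<n. bpc m d (D i)" using bp_bpc[OF m0] by blast
    have L: "p_L m d n \<eta> \<rho> = \<eta> x"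
      unfolding p_L_def
    proof (rule cSup_eq_maximum)
      show "\<eta> x \<in> success m d n \<eta> \<rho> ` {M. locc_measurement m d n M}"
        using Lne sMx by force
      fix s assume "s \<in> success m d n \<eta> \<rho> ` {M. locc_measurement m d n M}"
      then obtain M where M: "M \<in> locc m d n" and s: "s = success m d n \<eta> \<rho> M"
        unfolding locc_measurement_def by auto
      have "0 \<le> (\<Sum>y<n. Re (tr_on ?S (mmult_on ?S (D y) (M y))))"
        using locc_claim[OF M] bp by blast
      then show "s \<le> \<eta> x" unfolding s D_def success_D[where \<rho>=\<rho> and x=x and \<eta>=\<eta>, OF locc_sum[OF M] trx] by simp
    qed
    have SEP: "p_SEP m d n \<eta> \<rho> = \<eta> x"
      unfolding p_SEP_def
    proof (rule cSup_eq_maximum)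
      show "\<eta> x \<in> success m d n \<eta> \<rho> ` {M. sep_measurement m d n M}"
        using Sne sMx by force
      fix s assume "s \<in> success m d n \<eta> \<rho> ` {M. sep_measurement m d n M}"
      then obtain M where M: "sep_measurement m d n M" and s: "s = success m d n \<eta> \<rho> M"
        by auto
      have sum: "(\<lambda>a b. \<Sum>y<n. M y a b) = id_on ?S" and sepM: "\<forall>y<n. separable m d (M y)"
        using M unfolding sep_measurement_def measurement_def by auto
      have "0 \<le> (\<Sum>y<n. Re (tr_on ?S (mmult_on ?S (D y) (M y))))"
        using bp sepM unfolding bpc_def by (intro sum_nonneg) simp
      then show "s \<le> \<eta> x" unfolding s D_def success_D[where \<rho>=\<rho> and x=x and \<eta>=\<eta>, OF sum trx] by simp
    qed
    show ?thesis using L SEP True unfolding D_def by simp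
  next
    case False
    then obtain y where y: "y < n" and nbp: "\<not> block_positive m d (D y)" by blast
    have herm: "herm_on ?S (D y)"
    proof -
      have s1: "supp_on ?S (\<rho> x)" "supp_on ?S (\<rho> y)" using st x y psd_supp by blast+
      have px: "psd_on ?S (\<rho> x)" and py: "psd_on ?S (\<rho> y)" using st x y by auto
      note h1 = psd_cnj[OF px] psd_cnj[OF py]
      show ?thesis unfolding herm_on_def D_def
      proof (intro conjI allI)
        show "supp_on ?S (\<lambda>a b. complex_of_real (\<eta> x) * \<rho> x a b - complex_of_real (\<eta> y) * \<rho> y a b)"
          using s1 unfolding supp_on_def by simp
        fix a b
        show "complex_of_real (\<eta> x) * \<rho> x a b - complex_of_real (\<eta> y) * \<rho> y a b
            = cnj (complex_of_real (\<eta> x) * \<rho> x b a - complex_of_real (\<eta> y) * \<rho> y b a)"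
          by (simp add: h1)
      qed
    qed
    then obtain \<sigma> where sep: "separable m d \<sigma>" and neg: "Re (tr_on ?S (mmult_on ?S (D y) \<sigma>)) < 0"
      using nbp unfolding block_positive_def by force
    have yx: "y \<noteq> x"
    proof
      assume "y = x"
      then have "D y = (\<lambda>_ _. 0)" unfolding D_def by simp
      then show False using neg by simp
    qed
    obtain N :: nat and F where F: "\<forall>s<N. \<forall>k<m. psd_on {..<d k} (F s k)"
        and eq: "\<sigma> = (\<lambda>i j. \<Sum>s<N. tensor m d (F s) i j)"
      using sep unfolding separable_def by blast
    have "(\<Sum>s<N. Re (tr_on ?S (mmult_on ?S (D y) (tensor m d (F s))))) < 0"
      using neg unfolding eq mmult_sum_right tr_sum Re_sum .
    then obtain s where s: "s < N" and negs: "Re (tr_on ?S (mmult_on ?S (D y) (tensor m d (F s)))) < 0"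
      by (metis (no_types, lifting) lessThan_iff not_less sum_nonneg)
    obtain U where U: "\<forall>l<m. unitv (d l) (U l)"
        and negU: "Re (tr_on ?S (mmult_on ?S (D y) (tensor m d (\<lambda>l. rk1 (U l))))) < 0"
      using extract_vecs[of m d "F s" "D y"] F s negs by blast
    obtain M where M: "M \<in> locc m d n" and My: "M y = tensor m d (\<lambda>l. rk1 (U l))"
        and M0: "\<forall>z. z \<noteq> y \<and> z \<noteq> x \<longrightarrow> M z = (\<lambda>_ _. 0)"
      using protocol[OF y x yx U] by blast
    have "(\<Sum>z<n. Re (tr_on ?S (mmult_on ?S (D z) (M z))))
        = (\<Sum>z<n. if z = y then Re (tr_on ?S (mmult_on ?S (D y) (tensor m d (\<lambda>l. rk1 (U l))))) else 0)"
    proof (intro sum.cong refl)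
      fix z assume "z \<in> {..<n}"
      show "Re (tr_on ?S (mmult_on ?S (D z) (M z)))
          = (if z = y then Re (tr_on ?S (mmult_on ?S (D y) (tensor m d (\<lambda>l. rk1 (U l))))) else 0)"
      proof (cases "z = y")
        case True then show ?thesis using My by simp
      next
        case False
        show ?thesis
        proof (cases "z = x")
          case True
          then have "D z = (\<lambda>_ _. 0)" unfolding D_def by simp
          then show ?thesis using False by simp
        next
          case False2: False
          then show ?thesis using M0 False by simp
        qed
      qed
    qed
    also have "\<dots> = Re (tr_on ?S (mmult_on ?S (D y) (tensor m d (\<lambda>l. rk1 (U l)))))"
      using y by simp
    finally have "\<eta> x - success m d n \<eta> \<rho> M < 0"
      using negU unfolding D_def success_D[where \<rho>=\<rho> and x=x and \<eta>=\<eta>, OF locc_sum[OF M] trx] by simp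
    then have "\<eta> x < success m d n \<eta> \<rho> M" by simp
    also have "success m d n \<eta> \<rho> M \<le> p_L m d n \<eta> \<rho>"
    proof -
      have Mm: "M \<in> {M. locc_measurement m d n M}" using M by (simp add: locc_measurement_def)
      show ?thesis unfolding p_L_def by (rule cSup_upper[OF imageI[OF Mm] bddL])
    qed
    finally have "p_L m d n \<eta> \<rho> \<noteq> \<eta> x" by simp
    then show ?thesis using False unfolding D_def by simp
  qed
qed


end
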